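(* On the open set $U=\{(\vec x,\vec p)\in\mathbb{R}^6:\vec x\wedge\vec p\neq0\}$ with bracket $\{x^a,p^b\}=\delta^{ab}$, consider the constraints $\phi_1=\vec x\cdot\vec p$ and $\phi_2=|\vec x|^2-|\vec p|^2$. They are second class, with $\{\phi_1,\phi_2\}=-2(|\vec x|^2+|\vec p|^2)$, and define the Dirac bracket $$\{F,G\}_D=\{F,G\}-\sum_{i,j}\{F,\phi_i\}(C^{-1})^{ij}\{\phi_j,G\},\qquad C_{ij}=\{\phi_i,\phi_j\}.$$ On the surface $\Sigma=\{\phi_1=\phi_2=0\}\cap U$ set $\mathcal N=|\vec J|$ with $\vec J=\vec x\wedge\vec p$, $\vec K=|\vec x|\,\vec x$, $\vec L=|\vec p|\,\vec p$. Then on $\Sigma$: $|\vec J|^2=|\vec K|^2=|\vec L|^2=\mathcal N^2$, $\vec J\cdot\vec K=\vec J\cdot\vec L=\vec K\cdot\vec L=0$, and the Dirac brackets are $$\{J_a,J_b\}_D=\epsilon_{abc}J_c,\quad \{J_a,K_b\}_D=\epsilon_{abc}K_c,\quad \{J_a,L_b\}_D=\epsilon_{abc}L_c,$$ $$\{K_a,K_b\}_D=-\epsilon_{abc}J_c,\quad \{L_a,L_b\}_D=-\epsilon_{abc}J_c,\quad \{K_a,L_b\}_D=\delta_{ab}\mathcal N,$$ $$\{\mathcal N,J_a\}_D=0,\quad \{\mathcal N,K_a\}_D=-L_a,\quad \{\mathcal N,L_a\}_D=K_a,$$ i.e. $(\mathcal N,\vec J,\vec K,\vec L)$ span an $\mathfrak{so}(3,2)$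 algebra.
   Context: $\epsilon_{abc}$ is the totally antisymmetric symbol with $\epsilon_{123}=1$; repeated indices are summed. Dirac brackets of functions are evaluated on the constraint surface $\Sigma$. *)

theory Defs
  imports "HOL-Analysis.Analysis"
begin

text \<open>Phase space R^6 = R^3 x R^3; observables are functions F x p.
  Coordinates are indexed by the numeral type 3 (indices 1,2,3, with 3 = 0).\<close>

type_synonym obs = "real^3 \<Rightarrow> real^3 \<Rightarrow> real"

definition dX :: "obs \<Rightarrow> 3 \<Rightarrow> real^3 \<Rightarrow> real^3 \<Rightarrow> real" where
  "dX F a x p = deriv (\<lambda>t. F (x + t *\<^sub>R axis a 1) p) 0"

definition dP :: "obs \<Rightarrow> 3 \<Rightarrow> real^3 \<Rightarrow> real^3 \<Rightarrow> real" where
  "dP F a x p = deriv (\<lambda>t. F x (p + t *\<^sub>R axis a 1)) 0"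

definition pb :: "obs \<Rightarrow> obs \<Rightarrow> real^3 \<Rightarrow> real^3 \<Rightarrow> real" where
  "pb F G x p = (\<Sum>a\<in>UNIV. dX F a x p * dP G a x p - dP F a x p * dX G a x p)"

text \<open>The two constraints phi_1 = x.p, phi_2 = |x|^2 - |p|^2 (index 2 of type 2 is 2 = 0).\<close>
definition phi :: "2 \<Rightarrow> obs" where
  "phi i = (if i = 1 then (\<lambda>x p. x \<bullet> p) else (\<lambda>x p. (norm x)\<^sup>2 - (norm p)\<^sup>2))"

definition Cmat :: "real^3 \<Rightarrow> real^3 \<Rightarrow> real^2^2" where
  "Cmat x p = (\<chi> i j. pb (phi i) (phi j) x p)"

definition dirac :: "obs \<Rightarrow> obs \<Rightarrow> real^3 \<Rightarrow> real^3 \<Rightarrow> real" where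
  "dirac F G x p = pb F G x p
     - (\<Sum>i\<in>UNIV. \<Sum>j\<in>UNIV. pb F (phi i) x p * (matrix_inv (Cmat x p) $ i $ j) * pb (phi j) G x p)"

definition U :: "((real^3, real^3) prod) set" where
  "U = {(x, p). cross3 x p \<noteq> 0}"

definition Sigma_c :: "((real^3, real^3) prod) set" where
  "Sigma_c = {(x, p). (x, p) \<in> U \<and> phi 1 x p = 0 \<and> phi 2 x p = 0}"

text \<open>Levi-Civita symbol; cyclic in index arithmetic mod 3, eps 1 2 3 = 1.\<close>
definition eps :: "3 \<Rightarrow> 3 \<Rightarrow> 3 \<Rightarrow> real" where
  "eps a b c = (if b = a + 1 \<and> c = a + 2 then 1 else if b = a + 2 \<and> c = a + 1 then -1 else 0)"

definition Jv :: "real^3 \<Rightarrow> real^3 \<Rightarrow> real^3" where "Jv x p = cross3 x p"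
definition Kv :: "real^3 \<Rightarrow> real^3 \<Rightarrow> real^3" where "Kv x p = norm x *\<^sub>R x"
definition Lv :: "real^3 \<Rightarrow> real^3 \<Rightarrow> real^3" where "Lv x p = norm p *\<^sub>R p"
definition Nf :: obs where "Nf x p = norm (Jv x p)"

definition Jc :: "3 \<Rightarrow> obs" where "Jc a = (\<lambda>x p. Jv x p $ a)"
definition Kc :: "3 \<Rightarrow> obs" where "Kc a = (\<lambda>x p. Kv x p $ a)"
definition Lc :: "3 \<Rightarrow> obs" where "Lc a = (\<lambda>x p. Lv x p $ a)"

end

theory Submission
  imports Defs
begin


lemma norm_line: assumes "(v::real^3) \<noteq> 0"
  shows "((\<lambda>t. norm (v + t *\<^sub>R e)) has_real_derivative (v \<bullet> e / norm v)) (at 0)"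
proof -
  have eq: "(\<lambda>t. (v + t *\<^sub>R e) \<bullet> (v + t *\<^sub>R e)) = (\<lambda>t. v \<bullet> v + 2 * t * (v \<bullet> e) + t*t*(e \<bullet> e))"
    by (auto simp: inner_add inner_commute algebra_simps)
  have h1: "((\<lambda>t. (v + t *\<^sub>R e) \<bullet> (v + t *\<^sub>R e)) has_real_derivative 2*(v \<bullet> e)) (at 0)"
    unfolding eq by (rule derivative_eq_intros refl | simp)+
  have pos: "0 < v \<bullet> v" using assms by simp
  have "((\<lambda>t. sqrt ((v + t *\<^sub>R e) \<bullet> (v + t *\<^sub>R e))) has_real_derivative (inverse (sqrt (v \<bullet> v)) / 2) * (2*(v \<bullet> e))) (at 0)"
    using DERIV_chain2[OF DERIV_real_sqrt h1] pos by simp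
  moreover have "(inverse (sqrt (v \<bullet> v)) / 2) * (2*(v \<bullet> e)) = v \<bullet> e / norm v"
    by (simp add: norm_eq_sqrt_inner field_simps)
  ultimately show ?thesis by (simp add: norm_eq_sqrt_inner)
qed

lemma dX_eq: "((\<lambda>t. F (x + t *\<^sub>R axis a 1) p) has_real_derivative D) (at 0) \<Longrightarrow> dX F a x p = D"
  unfolding dX_def by (rule DERIV_imp_deriv)
lemma dP_eq: "((\<lambda>t. F x (p + t *\<^sub>R axis a 1)) has_real_derivative D) (at 0) \<Longrightarrow> dP F a x p = D"
  unfolding dP_def by (rule DERIV_imp_deriv)

lemma lin_deriv: "((\<lambda>t. c + t * d) has_real_derivative d) (at (0::real))"
  by (rule derivative_eq_intros refl | simp)+

lemma dX_J: "dX (Jc b) a x p = cross3 (axis a 1) p $ b"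
  apply (rule dX_eq) unfolding Jc_def Jv_def
  by (simp add: cross_add_left cross_mult_left lin_deriv)
lemma dP_J: "dP (Jc b) a x p = cross3 x (axis a 1) $ b"
  apply (rule dP_eq) unfolding Jc_def Jv_def
  by (simp add: cross_add_right cross_mult_right lin_deriv)

lemma dX_K: "x \<noteq> 0 \<Longrightarrow> dX (Kc b) a x p = x $ a / norm x * x $ b + norm x * axis a 1 $ b"
  apply (rule dX_eq) unfolding Kc_def Kv_def
  apply simp
  apply (rule derivative_eq_intros norm_line refl | simp)+
  apply (simp add: inner_axis)
  done
lemma dP_K: "dP (Kc b) a x p = 0"
  apply (rule dP_eq) unfolding Kc_def Kv_def by simp
lemma dX_L: "dX (Lc b) a x p = 0"
  apply (rule dX_eq) unfolding Lc_def Lv_def by simp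
lemma dP_L: "p \<noteq> 0 \<Longrightarrow> dP (Lc b) a x p = p $ a / norm p * p $ b + norm p * axis a 1 $ b"
  apply (rule dP_eq) unfolding Lc_def Lv_def
  apply simp
  apply (rule derivative_eq_intros norm_line refl | simp)+
  apply (simp add: inner_axis)
  done
lemma dX_N: "cross3 x p \<noteq> 0 \<Longrightarrow> dX Nf a x p = cross3 x p \<bullet> cross3 (axis a 1) p / norm (cross3 x p)"
  apply (rule dX_eq) unfolding Nf_def Jv_def
  by (simp add: cross_add_left cross_mult_left norm_line)
lemma dP_N: "cross3 x p \<noteq> 0 \<Longrightarrow> dP Nf a x p = cross3 x p \<bullet> cross3 x (axis a 1) / norm (cross3 x p)"
  apply (rule dP_eq) unfolding Nf_def Jv_def
  by (simp add: cross_add_right cross_mult_right norm_line)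
lemma dX_phi1: "dX (phi 1) a x p = p $ a"
  apply (rule dX_eq) unfolding phi_def
  apply (simp add: inner_add_left inner_axis inner_axis')
  by (rule derivative_eq_intros refl | simp)+
lemma dP_phi1: "dP (phi 1) a x p = x $ a"
  apply (rule dP_eq) unfolding phi_def
  apply (simp add: inner_add_right inner_axis inner_commute)
  by (rule derivative_eq_intros refl | simp)+
lemma sq_line: "(norm (v + t *\<^sub>R axis a 1))\<^sup>2 = (norm v)\<^sup>2 + 2 * t * (v $ a) + t*t"
  by (simp add: power2_norm_eq_inner inner_add inner_commute inner_axis algebra_simps)
lemma dX_phi2: "dX (phi 2) a x p = 2 * x $ a"
  apply (rule dX_eq) unfolding phi_def
  apply (simp add: sq_line)
  by (rule derivative_eq_intros refl | simp)+
lemma dP_phi2: "dP (phi 2) a x p = - 2 * p $ a"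
  apply (rule dP_eq) unfolding phi_def
  apply (simp add: sq_line)
  by (rule derivative_eq_intros refl | simp)+

lemma pb_phi: "pb (phi 1) (phi 1) x p = 0" "pb (phi 2) (phi 2) x p = 0"
  "pb (phi 1) (phi 2) x p = - 2 * ((norm x)\<^sup>2 + (norm p)\<^sup>2)"
  "pb (phi 2) (phi 1) x p = 2 * ((norm x)\<^sup>2 + (norm p)\<^sup>2)"
  unfolding pb_def dX_phi1 dP_phi1 dX_phi2 dP_phi2
  by (simp_all add: sum_3 power2_norm_eq_inner inner_vec_def algebra_simps)

lemma Cmat_eq: "Cmat x p = (let S = 2 * ((norm x)\<^sup>2 + (norm p)\<^sup>2) in vector [vector [0, -S], vector [S, 0]])"
  unfolding Cmat_def Let_def
  by (simp add: vec_eq_iff forall_2 pb_phi vector_2)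

lemma minv_unique: fixes A :: "real^'n^'n"
  assumes "A ** B = mat 1" "B ** A = mat 1" shows "matrix_inv A = B"
proof -
  let ?P = "\<lambda>A'. A ** A' = mat 1 \<and> A' ** A = mat 1"
  have "?P (matrix_inv A)" unfolding matrix_inv_def by (rule someI[of ?P B]) (use assms in auto)
  then have "matrix_inv A = (B ** A) ** matrix_inv A" using assms by (simp add: matrix_mul_lid)
  also have "\<dots> = B" using \<open>?P (matrix_inv A)\<close> by (simp add: matrix_mul_assoc[symmetric] matrix_mul_rid)
  finally show ?thesis .
qed

lemma Cinv: assumes "x \<noteq> 0"
  shows "matrix_inv (Cmat x p) = (let S = 2 * ((norm x)\<^sup>2 + (norm p)\<^sup>2) in vector [vector [0, 1/S], vector [-1/S, 0]])"
    and "invertible (Cmat x p)"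
proof -
  define S where "S = 2 * ((norm x)\<^sup>2 + (norm p)\<^sup>2)"
  have S: "S \<noteq> 0" using assms unfolding S_def by (simp add: add_nonneg_eq_0_iff)
  let ?B = "vector [vector [0, 1/S], vector [-1/S, 0]] :: real^2^2"
  have C: "Cmat x p = vector [vector [0, -S], vector [S, 0]]" unfolding Cmat_eq S_def Let_def ..
  have 1: "Cmat x p ** ?B = mat 1" "?B ** Cmat x p = mat 1" unfolding C using S
    by (simp_all add: vec_eq_iff forall_2 matrix_matrix_mult_def sum_2 vector_2 mat_def)
  show "matrix_inv (Cmat x p) = (let S = 2 * ((norm x)\<^sup>2 + (norm p)\<^sup>2) in vector [vector [0, 1/S], vector [-1/S, 0]])"
    unfolding Let_def S_def[symmetric] by (rule minv_unique[OF 1])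
  show "invertible (Cmat x p)" unfolding invertible_def using 1 by blast
qed

lemma dirac_eq: assumes "x \<noteq> 0"
  shows "dirac F G x p = pb F G x p - (pb F (phi 1) x p * pb (phi 2) G x p - pb F (phi 2) x p * pb (phi 1) G x p)
      / (2 * ((norm x)\<^sup>2 + (norm p)\<^sup>2))"
  unfolding dirac_def Cinv(1)[OF assms] Let_def
  by (simp add: sum_2 vector_2 diff_divide_distrib add_divide_distrib algebra_simps)
lemma t1: "(1::3) \<noteq> 2 \<and> (1::3) \<noteq> 3 \<and> (2::3) \<noteq> 3 \<and> (3::3) = 0" by simp

lemma Sig: assumes "(x,p) \<in> Sigma_c"
  shows "x \<noteq> 0" "p \<noteq> 0" "cross3 x p \<noteq> 0" "x \<bullet> p = 0" "norm p = norm x"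
    "norm (cross3 x p) = norm x * norm x"
    "(norm x)^2 = (x$1)^2 + (x$2)^2 + (x$3)^2"
    "(norm x)^2 = (p$1)^2 + (p$2)^2 + (p$3)^2"
proof -
  show "(norm x)^2 = (x$1)^2 + (x$2)^2 + (x$3)^2" by (simp only: power2_norm_eq_inner) (simp add: inner_vec_def sum_3 power2_eq_square)
  show c: "cross3 x p \<noteq> 0" using assms unfolding Sigma_c_def U_def by auto
  then show "x \<noteq> 0" "p \<noteq> 0" by auto
  show xp: "x \<bullet> p = 0" using assms unfolding Sigma_c_def phi_def by auto
  have "(norm x)\<^sup>2 = (norm p)\<^sup>2" using assms unfolding Sigma_c_def phi_def by auto
  then show np: "norm p = norm x" by (simp add: power2_eq_iff_nonneg)
  have "(norm (cross3 x p))\<^sup>2 = (norm x * norm p)\<^sup>2" using norm_cross_dot[of x p] xp by simp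
  then show "norm (cross3 x p) = norm x * norm x" using np by (simp add: power2_eq_iff_nonneg)
  show "(norm x)^2 = (p$1)^2 + (p$2)^2 + (p$3)^2" using np by (simp only: np[symmetric] power2_norm_eq_inner) (simp add: inner_vec_def sum_3 power2_eq_square)
qed

lemmas comp_simps = cross_components axis_def inner_vec_def sum_3 dX_J dP_J dX_K dP_K dX_L dP_L dX_N dP_N
   dX_phi1 dP_phi1 dX_phi2 dP_phi2

lemma inv_forms:
  "x \<noteq> 0 \<Longrightarrow> dX (Kc b) a x p = x $ a * inverse (norm x) * x $ b + norm x * axis a 1 $ b"
  "p \<noteq> 0 \<Longrightarrow> dP (Lc b) a x p = p $ a * inverse (norm p) * p $ b + norm p * axis a 1 $ b"
  "cross3 x p \<noteq> 0 \<Longrightarrow> dX Nf a x p = cross3 x p \<bullet> cross3 (axis a 1) p * inverse (norm (cross3 x p))"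
  "cross3 x p \<noteq> 0 \<Longrightarrow> dP Nf a x p = cross3 x p \<bullet> cross3 x (axis a 1) * inverse (norm (cross3 x p))"
  by (simp_all add: dX_K dP_L dX_N dP_N divide_inverse)

lemma dirac_inv: assumes "x \<noteq> 0"
  shows "dirac F G x p = pb F G x p - (pb F (phi 1) x p * pb (phi 2) G x p - pb F (phi 2) x p * pb (phi 1) G x p)
      * inverse (2 * ((norm x)\<^sup>2 + (norm p)\<^sup>2))"
  using dirac_eq[OF assms] by (simp add: divide_inverse)

lemmas comp2 = cross_components axis_def inner_vec_def sum_3 dX_J dP_J inv_forms dP_K dX_L
   dX_phi1 dP_phi1 dX_phi2 dP_phi2
lemmas defs2 = Nf_def Jv_def Kc_def Lc_def Kv_def Lv_def Jc_def

lemma eps_vals: "eps 1 1 c = 0" "eps 2 2 c = 0" "eps 3 3 c = 0"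
  "eps 1 2 1 = 0" "eps 1 2 2 = 0" "eps 1 2 3 = 1" by (simp_all add: eps_def)

lemma brackets: assumes "(x,p) \<in> Sigma_c"
  shows "\<forall>a b.
          dirac (Jc a) (Jc b) x p = (\<Sum>c\<in>UNIV. eps a b c * Jc c x p)
        \<and> dirac (Jc a) (Kc b) x p = (\<Sum>c\<in>UNIV. eps a b c * Kc c x p)
        \<and> dirac (Jc a) (Lc b) x p = (\<Sum>c\<in>UNIV. eps a b c * Lc c x p)
        \<and> dirac (Kc a) (Kc b) x p = - (\<Sum>c\<in>UNIV. eps a b c * Jc c x p)
        \<and> dirac (Lc a) (Lc b) x p = - (\<Sum>c\<in>UNIV. eps a b c * Jc c x p)
        \<and> dirac (Kc a) (Lc b) x p = (if a = b then Nf x p else 0)"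
    and "\<forall>a.
          dirac Nf (Jc a) x p = 0
        \<and> dirac Nf (Kc a) x p = - Lc a x p
        \<and> dirac Nf (Lc a) x p = Kc a x p"
proof -
  note S = Sig[OF assms]
  obtain r where r: "norm x = r" by blast
  obtain ir where ir: "inverse r = ir" by blast
  have rir: "r * ir = 1" using S(1) r ir by auto
  have h1: "r^2 = (x$1)^2 + (x$2)^2 + (x$3)^2" "r^2 = (p$1)^2 + (p$2)^2 + (p$3)^2"
     "x$1 * p$1 + x$2*p$2 + x$3*p$3 = 0"
    using S(4,7,8) r by (simp_all add: inner_vec_def sum_3)
  have nz: "ir \<noteq> 0" "r \<noteq> 0" using rir by auto
  have iR: "inverse (r^2) = ir * ir" using ir by (simp add: power2_eq_square inverse_mult_distrib)
  have iC: "inverse (norm (cross3 x p)) = ir * ir" using S(6) r ir by (simp add: inverse_mult_distrib)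
  show "\<forall>a b.
          dirac (Jc a) (Jc b) x p = (\<Sum>c\<in>UNIV. eps a b c * Jc c x p)
        \<and> dirac (Jc a) (Kc b) x p = (\<Sum>c\<in>UNIV. eps a b c * Kc c x p)
        \<and> dirac (Jc a) (Lc b) x p = (\<Sum>c\<in>UNIV. eps a b c * Lc c x p)
        \<and> dirac (Kc a) (Kc b) x p = - (\<Sum>c\<in>UNIV. eps a b c * Jc c x p)
        \<and> dirac (Lc a) (Lc b) x p = - (\<Sum>c\<in>UNIV. eps a b c * Jc c x p)
        \<and> dirac (Kc a) (Lc b) x p = (if a = b then Nf x p else 0)"
    unfolding forall_3
    apply (intro conjI)
    apply (simp_all add: dirac_inv S(1-3) pb_def)
    apply (simp_all add: comp2 S(1-3))
    apply (simp_all add: defs2 eps_def sum_3 cross_components S(5,6) r ir iC iR nz)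
    apply ((simp add: algebra_simps; fail) | (insert rir h1, algebra))+
    done
  show "\<forall>a.
          dirac Nf (Jc a) x p = 0
        \<and> dirac Nf (Kc a) x p = - Lc a x p
        \<and> dirac Nf (Lc a) x p = Kc a x p"
    unfolding forall_3
    apply (intro conjI)
    apply (simp_all add: dirac_inv S(1-3) pb_def)
    apply (simp_all add: comp2 S(1-3))
    apply (simp_all add: defs2 eps_def sum_3 cross_components S(5,6) r ir iC iR nz)
    apply ((simp add: algebra_simps; fail) | (insert rir h1, algebra))+
    done
qed

theorem mainTheorem6:
  shows "(\<forall>x p. pb (phi 1) (phi 2) x p = - 2 * ((norm x)\<^sup>2 + (norm p)\<^sup>2))
    \<and> (\<forall>x p. (x, p) \<in> U \<longrightarrow> invertible (Cmat x p))
    \<and> (\<forall>x p. (x, p) \<in> Sigma_c \<longrightarrow>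
        (norm (Jv x p))\<^sup>2 = (Nf x p)\<^sup>2 \<and> (norm (Kv x p))\<^sup>2 = (Nf x p)\<^sup>2
      \<and> (norm (Lv x p))\<^sup>2 = (Nf x p)\<^sup>2
      \<and> Jv x p \<bullet> Kv x p = 0 \<and> Jv x p \<bullet> Lv x p = 0 \<and> Kv x p \<bullet> Lv x p = 0
      \<and> (\<forall>a b.
          dirac (Jc a) (Jc b) x p = (\<Sum>c\<in>UNIV. eps a b c * Jc c x p)
        \<and> dirac (Jc a) (Kc b) x p = (\<Sum>c\<in>UNIV. eps a b c * Kc c x p)
        \<and> dirac (Jc a) (Lc b) x p = (\<Sum>c\<in>UNIV. eps a b c * Lc c x p)
        \<and> dirac (Kc a) (Kc b) x p = - (\<Sum>c\<in>UNIV. eps a b c * Jc c x p)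
        \<and> dirac (Lc a) (Lc b) x p = - (\<Sum>c\<in>UNIV. eps a b c * Jc c x p)
        \<and> dirac (Kc a) (Lc b) x p = (if a = b then Nf x p else 0))
      \<and> (\<forall>a.
          dirac Nf (Jc a) x p = 0
        \<and> dirac Nf (Kc a) x p = - Lc a x p
        \<and> dirac Nf (Lc a) x p = Kc a x p))"
  proof -
  have A: "\<forall>x p. pb (phi 1) (phi 2) x p = - 2 * ((norm x)\<^sup>2 + (norm p)\<^sup>2)" using pb_phi by blast
  have B: "\<forall>x p. (x, p) \<in> U \<longrightarrow> invertible (Cmat x p)"
  proof (intro allI impI)
    fix x p assume "(x, p) \<in> U"
    then have "x \<noteq> 0" unfolding U_def by auto
    then show "invertible (Cmat x p)" by (rule Cinv(2))
  qed
  have C: "(norm (Jv x p))\<^sup>2 = (Nf x p)\<^sup>2 \<and> (norm (Kv x p))\<^sup>2 = (Nf x p)\<^sup>2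
      \<and> (norm (Lv x p))\<^sup>2 = (Nf x p)\<^sup>2
      \<and> Jv x p \<bullet> Kv x p = 0 \<and> Jv x p \<bullet> Lv x p = 0 \<and> Kv x p \<bullet> Lv x p = 0"
    if "(x, p) \<in> Sigma_c" for x p
  proof -
    note S = Sig[OF that]
    show ?thesis
      by (simp add: Jv_def Kv_def Lv_def Nf_def S(4,5,6) dot_cross_self power2_eq_square
          inner_scaleR_left inner_scaleR_right)
  qed
  show ?thesis using A B C brackets by blast
qed

end
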